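(* A graph $G=(V,E)$ is $(1,1)$-well-covered if and only if there is a positive integer $k$ and a partition $V=(S,K)$ with $S$ an independent set, $K$ a clique and $|K|=k$, such that the degree sequence of $G$ (listing first the $k$ vertices of $K$ and then the vertices of $S$) is either $(k,k,\ldots,k,i_1,i_2,\ldots,i_s,0,0,\ldots,0)$ with $\sum_{j=1}^s i_j = k$, or $(k-1,k-1,\ldots,k-1,0,0,\ldots,0)$, where the initial blocks $k,\ldots,k$ (resp. $k-1,\ldots,k-1$) have length $k$.
   Context: A $(1,1)$-partition of $G$ is a partition of $V(G)$ into an independent set and a clique. A graph is well-covered if all its maximal independent sets have the same cardinality; it is $(1,1)$-well-covered if it admits a $(1,1)$-partition and is well-covered. *)

theory Defs
  imports Main
begin

definition simple_graph :: "'a set \<Rightarrow> ('a \<Rightarrow> 'a \<Rightarrow> bool) \<Rightarrow> bool" where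
  "simple_graph V E \<longleftrightarrow> finite V \<and> (\<forall>x y. E x y \<longrightarrow> x \<in> V \<and> y \<in> V)
     \<and> (\<forall>x y. E x y \<longrightarrow> E y x) \<and> (\<forall>x. \<not> E x x)"

definition independent_set :: "'a set \<Rightarrow> ('a \<Rightarrow> 'a \<Rightarrow> bool) \<Rightarrow> 'a set \<Rightarrow> bool" where
  "independent_set V E S \<longleftrightarrow> S \<subseteq> V \<and> (\<forall>x\<in>S. \<forall>y\<in>S. \<not> E x y)"

definition clique :: "'a set \<Rightarrow> ('a \<Rightarrow> 'a \<Rightarrow> bool) \<Rightarrow> 'a set \<Rightarrow> bool" where
  "clique V E K \<longleftrightarrow> K \<subseteq> V \<and> (\<forall>x\<in>K. \<forall>y\<in>K. x \<noteq> y \<longrightarrow> E x y)"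

definition maximal_independent_set :: "'a set \<Rightarrow> ('a \<Rightarrow> 'a \<Rightarrow> bool) \<Rightarrow> 'a set \<Rightarrow> bool" where
  "maximal_independent_set V E S \<longleftrightarrow> independent_set V E S \<and>
     (\<forall>T. independent_set V E T \<and> S \<subseteq> T \<longrightarrow> T = S)"

definition well_covered :: "'a set \<Rightarrow> ('a \<Rightarrow> 'a \<Rightarrow> bool) \<Rightarrow> bool" where
  "well_covered V E \<longleftrightarrow> (\<forall>S T. maximal_independent_set V E S \<and> maximal_independent_set V E T
     \<longrightarrow> card S = card T)"

definition partition_11 :: "'a set \<Rightarrow> ('a \<Rightarrow> 'a \<Rightarrow> bool) \<Rightarrow> 'a set \<Rightarrow> 'a set \<Rightarrow> bool" where
  "partition_11 V E S K \<longleftrightarrow> S \<inter> K = {} \<and> S \<union> K = V \<and> independent_set V E S \<and> clique V E K"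

definition has_11_partition :: "'a set \<Rightarrow> ('a \<Rightarrow> 'a \<Rightarrow> bool) \<Rightarrow> bool" where
  "has_11_partition V E \<longleftrightarrow> (\<exists>S K. partition_11 V E S K)"

definition well_covered_11 :: "'a set \<Rightarrow> ('a \<Rightarrow> 'a \<Rightarrow> bool) \<Rightarrow> bool" where
  "well_covered_11 V E \<longleftrightarrow> has_11_partition V E \<and> well_covered V E"

definition degree :: "'a set \<Rightarrow> ('a \<Rightarrow> 'a \<Rightarrow> bool) \<Rightarrow> 'a \<Rightarrow> nat" where
  "degree V E v = card {u \<in> V. E v u}"

end

theory Submission
  imports Defs
begin

lemma fin_parts:
  assumes "simple_graph V E" "partition_11 V E S K"
  shows "finite S" "finite K" "finite V"
  using assms unfolding simple_graph_def partition_11_def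
  by (auto intro: finite_subset)

lemma degK:
  assumes g: "simple_graph V E" and p: "partition_11 V E S K" and v: "v \<in> K"
  shows "degree V E v = (card K - 1) + card {u\<in>S. E v u}"
proof -
  have fS: "finite S" and fK: "finite K" using fin_parts[OF g p] by auto
  have eq: "{u\<in>V. E v u} = (K - {v}) \<union> {u\<in>S. E v u}"
    using g p v unfolding simple_graph_def partition_11_def clique_def by auto
  have dj: "(K - {v}) \<inter> {u\<in>S. E v u} = {}" using p unfolding partition_11_def by auto
  have "card {u\<in>V. E v u} = card (K - {v}) + card {u\<in>S. E v u}"
    unfolding eq using fS fK dj by (simp add: card_Un_disjoint)
  then show ?thesis using v by (simp add: degree_def)
qed

lemma degS:
  assumes g: "simple_graph V E" and p: "partition_11 V E S K" and s: "s \<in> S"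
  shows "degree V E s = card {u\<in>K. E s u}"
proof -
  have eq: "{u\<in>V. E s u} = {u\<in>K. E s u}"
    using g p s unfolding simple_graph_def partition_11_def independent_set_def by auto
  show ?thesis unfolding degree_def eq ..
qed

lemma T_indep:
  assumes g: "simple_graph V E" and p: "partition_11 V E S K" and v: "v \<in> K"
  shows "independent_set V E (insert v {u\<in>S. \<not> E v u})"
proof -
  have sym: "\<And>x y. E x y \<Longrightarrow> E y x" and irr: "\<And>x. \<not> E x x"
    using g unfolding simple_graph_def by blast+
  have SV: "S \<subseteq> V" and KV: "K \<subseteq> V" and Si: "\<And>x y. x \<in> S \<Longrightarrow> y \<in> S \<Longrightarrow> \<not> E x y"
    using p unfolding partition_11_def independent_set_def clique_def by blast+
  show ?thesis unfolding independent_set_def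
  proof (intro conjI ballI)
    show "insert v {u\<in>S. \<not> E v u} \<subseteq> V" using SV KV v by auto
    fix x y assume x: "x \<in> insert v {u\<in>S. \<not> E v u}" and y: "y \<in> insert v {u\<in>S. \<not> E v u}"
    show "\<not> E x y"
    proof (cases "x = v")
      case True
      then show ?thesis using y irr by auto
    next
      case False
      then have xS: "x \<in> S" "\<not> E v x" using x by auto
      show ?thesis
      proof (cases "y = v")
        case True
        then show ?thesis using xS sym by blast
      next
        case False
        then show ?thesis using xS y Si by auto
      qed
    qed
  qed
qed

lemma T_max:
  assumes g: "simple_graph V E" and p: "partition_11 V E S K" and v: "v \<in> K"
  shows "maximal_independent_set V E (insert v {u\<in>S. \<not> E v u})"
  unfolding maximal_independent_set_def
proof (intro conjI allI impI)
  show "independent_set V E (insert v {u\<in>S. \<not> E v u})" by (rule T_indep[OF g p v])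
  fix T assume h: "independent_set V E T \<and> insert v {u\<in>S. \<not> E v u} \<subseteq> T"
  show "T = insert v {u\<in>S. \<not> E v u}"
  proof
    show "T \<subseteq> insert v {u\<in>S. \<not> E v u}"
    proof
      fix x assume x: "x \<in> T"
      have vT: "v \<in> T" using h by auto
      have "\<not> E v x" using h x vT unfolding independent_set_def by blast
      moreover have "x \<in> V" using h x unfolding independent_set_def by auto
      moreover have "S \<union> K = V" and cl: "\<And>a b. a \<in> K \<Longrightarrow> b \<in> K \<Longrightarrow> a \<noteq> b \<Longrightarrow> E a b"
        using p unfolding partition_11_def clique_def by blast+
      ultimately show "x \<in> insert v {u\<in>S. \<not> E v u}"
        using v cl[of v x] by auto
    qed
  qed (use h in auto)
qed

lemma max_char:
  assumes g: "simple_graph V E" and p: "partition_11 V E S K"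
    and I: "maximal_independent_set V E I"
  shows "I = S \<or> (\<exists>v\<in>K. I = insert v {u\<in>S. \<not> E v u})"
proof -
  have Ii: "independent_set V E I" and Im: "\<And>T. independent_set V E T \<Longrightarrow> I \<subseteq> T \<Longrightarrow> T = I"
    using I unfolding maximal_independent_set_def by auto
  have IV: "I \<subseteq> V" and Ie: "\<And>x y. x \<in> I \<Longrightarrow> y \<in> I \<Longrightarrow> \<not> E x y"
    using Ii unfolding independent_set_def by auto
  have SK: "S \<union> K = V" and cl: "\<And>a b. a \<in> K \<Longrightarrow> b \<in> K \<Longrightarrow> a \<noteq> b \<Longrightarrow> E a b"
    and Si: "independent_set V E S"
    using p unfolding partition_11_def clique_def by blast+
  show ?thesis
  proof (cases "I \<inter> K = {}")
    case True
    have "I \<subseteq> S" using True IV SK by auto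
    then have "S = I" using Im[OF Si] by simp
    then show ?thesis by simp
  next
    case False
    then obtain v where vI: "v \<in> I" and vK: "v \<in> K" by auto
    have "I \<subseteq> insert v {u\<in>S. \<not> E v u}"
    proof
      fix x assume x: "x \<in> I"
      have "\<not> E v x" using Ie[OF vI x] .
      moreover have "x \<in> V" using IV x by auto
      ultimately show "x \<in> insert v {u\<in>S. \<not> E v u}"
        using vK cl[of v x] SK by auto
    qed
    then have "insert v {u\<in>S. \<not> E v u} = I"
      using Im[OF T_indep[OF g p vK]] by simp
    then show ?thesis using vK by auto
  qed
qed

lemma card_T:
  assumes g: "simple_graph V E" and p: "partition_11 V E S K" and v: "v \<in> K"
  shows "card (insert v {u\<in>S. \<not> E v u}) = Suc (card {u\<in>S. \<not> E v u})"
    and "card {u\<in>S. \<not> E v u} + card {u\<in>S. E v u} = card S"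
proof -
  have fS: "finite S" using fin_parts[OF g p] by auto
  have "v \<notin> S" using p v unfolding partition_11_def by auto
  then show "card (insert v {u\<in>S. \<not> E v u}) = Suc (card {u\<in>S. \<not> E v u})"
    using fS by simp
  have "S = {u\<in>S. \<not> E v u} \<union> {u\<in>S. E v u}" by auto
  then have "card S = card ({u\<in>S. \<not> E v u} \<union> {u\<in>S. E v u})" by simp
  also have "\<dots> = card {u\<in>S. \<not> E v u} + card {u\<in>S. E v u}"
    using fS by (intro card_Un_disjoint) auto
  finally show "card {u\<in>S. \<not> E v u} + card {u\<in>S. E v u} = card S" by simp
qed

lemma double_count:
  assumes g: "simple_graph V E" and p: "partition_11 V E S K"
  shows "(\<Sum>s\<in>S. card {u\<in>K. E s u}) = (\<Sum>u\<in>K. card {s\<in>S. E u s})"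
proof -
  have fS: "finite S" and fK: "finite K" using fin_parts[OF g p] by auto
  have sym: "\<And>x y. E x y = E y x" using g unfolding simple_graph_def by blast
  have "(\<Sum>s\<in>S. card {u\<in>K. E s u}) = (\<Sum>s\<in>S. \<Sum>u\<in>K. if E s u then 1 else 0)"
    using fK by (simp add: sum.inter_filter[symmetric])
  also have "\<dots> = (\<Sum>u\<in>K. \<Sum>s\<in>S. if E s u then 1 else 0)" by (rule sum.swap)
  also have "\<dots> = (\<Sum>u\<in>K. card {s\<in>S. E u s})"
    using fS by (simp add: sum.inter_filter[symmetric] sym)
  finally show ?thesis .
qed


theorem lemma4:
  fixes V :: "'a set" and E :: "'a \<Rightarrow> 'a \<Rightarrow> bool"
  assumes "simple_graph V E" and "V \<noteq> {}"
  shows "well_covered_11 V E \<longleftrightarrow>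
    (\<exists>k::nat. \<exists>S K. k > 0 \<and> partition_11 V E S K \<and> card K = k \<and>
       (((\<forall>v\<in>K. degree V E v = k) \<and> (\<Sum>v\<in>S. degree V E v) = k) \<or>
        ((\<forall>v\<in>K. degree V E v = k - 1) \<and> (\<forall>v\<in>S. degree V E v = 0))))"
proof
  note g = assms(1)
  have sym: "\<And>x y. E x y \<Longrightarrow> E y x" using g unfolding simple_graph_def by blast
  assume wc: "well_covered_11 V E"
  then obtain S K where p: "partition_11 V E S K"
    unfolding well_covered_11_def has_11_partition_def by blast
  have w: "well_covered V E" using wc unfolding well_covered_11_def by blast
  have fS: "finite S" and fK: "finite K" using fin_parts[OF g p] by auto
  show "\<exists>k::nat. \<exists>S K. k > 0 \<and> partition_11 V E S K \<and> card K = k \<and>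
       (((\<forall>v\<in>K. degree V E v = k) \<and> (\<Sum>v\<in>S. degree V E v) = k) \<or>
        ((\<forall>v\<in>K. degree V E v = k - 1) \<and> (\<forall>v\<in>S. degree V E v = 0)))"
  proof (cases "K = {}")
    case True
    then have VS: "V = S" using p unfolding partition_11_def by auto
    obtain a where a: "a \<in> V" using assms(2) by auto
    have noE: "\<And>x y. \<not> E x y"
    proof
      fix x y assume e: "E x y"
      then have "x \<in> S" "y \<in> S" using g VS unfolding simple_graph_def by auto
      then show False using e p unfolding partition_11_def independent_set_def by blast
    qed
    have p2: "partition_11 V E (S - {a}) {a}"
      using a VS noE unfolding partition_11_def independent_set_def clique_def by auto
    have d0: "\<And>x. degree V E x = 0" using noE unfolding degree_def by simp
    show ?thesis
      by (rule exI[of _ 1], rule exI[of _ "S - {a}"], rule exI[of _ "{a}"]) (simp add: p2 d0)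
  next
    case False
    define N where "N v = {u\<in>S. E v u}" for v
    define M where "M v = {u\<in>S. \<not> E v u}" for v
    have cT: "\<And>v. v \<in> K \<Longrightarrow> card (insert v (M v)) = Suc (card (M v))"
      and cMN: "\<And>v. v \<in> K \<Longrightarrow> card (M v) + card (N v) = card S"
      using card_T[OF g p] unfolding M_def N_def by auto
    have Tm: "\<And>v. v \<in> K \<Longrightarrow> maximal_independent_set V E (insert v (M v))"
      using T_max[OF g p] unfolding M_def by auto
    have kpos: "card K > 0" using False fK by auto
    have dK: "\<And>v. v \<in> K \<Longrightarrow> degree V E v = (card K - 1) + card (N v)"
      using degK[OF g p] unfolding N_def by auto
    show ?thesis
    proof (cases "\<forall>v\<in>K. N v \<noteq> {}")
      case True
      have Smax: "maximal_independent_set V E S"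
        unfolding maximal_independent_set_def
      proof (intro conjI allI impI)
        show "independent_set V E S" using p unfolding partition_11_def by auto
        fix T assume h: "independent_set V E T \<and> S \<subseteq> T"
        show "T = S"
        proof (rule ccontr)
          assume "T \<noteq> S"
          then obtain x where x: "x \<in> T" "x \<notin> S" using h by auto
          then have xK: "x \<in> K" using h p unfolding independent_set_def partition_11_def by auto
          then obtain s where "s \<in> N x" using True by auto
          then have "s \<in> T" "E x s" using h unfolding N_def by auto
          then show False using h x unfolding independent_set_def by blast
        qed
      qed
      have N1: "\<And>v. v \<in> K \<Longrightarrow> card (N v) = 1"
      proof -
        fix v assume v: "v \<in> K"
        have "card (insert v (M v)) = card S" using w Tm[OF v] Smax unfolding well_covered_def by blast
        moreover have "card (N v) > 0" using True v fS unfolding N_def by (simp add: card_gt_0_iff)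
        ultimately show "card (N v) = 1" using cT[OF v] cMN[OF v] by linarith
      qed
      have "(\<Sum>v\<in>S. degree V E v) = (\<Sum>s\<in>S. card {u\<in>K. E s u})"
        using degS[OF g p] by simp
      also have "\<dots> = (\<Sum>u\<in>K. card (N u))" using double_count[OF g p] unfolding N_def by simp
      also have "\<dots> = (\<Sum>u\<in>K. 1)" using N1 by simp
      finally have sumk: "(\<Sum>v\<in>S. degree V E v) = card K" by simp
      have "\<forall>v\<in>K. degree V E v = card K" using dK N1 kpos by auto
      then show ?thesis
        by (intro exI[of _ "card K"] exI[of _ S] exI[of _ K]) (simp add: p sumk kpos)
    next
      case False
      then obtain v0 where v0: "v0 \<in> K" "N v0 = {}" by auto
      have N0: "\<And>v. v \<in> K \<Longrightarrow> N v = {}"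
      proof -
        fix v assume v: "v \<in> K"
        have "card (insert v (M v)) = card (insert v0 (M v0))"
          using w Tm[OF v] Tm[OF v0(1)] unfolding well_covered_def by blast
        then have "card (N v) = 0" using cT[OF v] cMN[OF v] cT[OF v0(1)] cMN[OF v0(1)] v0(2) by simp
        then show "N v = {}" using fS unfolding N_def by simp
      qed
      have "\<forall>v\<in>K. degree V E v = card K - 1" using dK N0 by simp
      moreover have "\<forall>s\<in>S. degree V E s = 0"
      proof
        fix s assume s: "s \<in> S"
        have e: "{u\<in>K. E s u} = {}" using N0 s sym unfolding N_def by blast
        show "degree V E s = 0" unfolding degS[OF g p s] e by simp
      qed
      ultimately show ?thesis
        by (intro exI[of _ "card K"] exI[of _ S] exI[of _ K]) (simp add: p kpos)
    qed
  qed
next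
  note g = assms(1)
  have sym: "\<And>x y. E x y \<Longrightarrow> E y x" using g unfolding simple_graph_def by blast
  assume "\<exists>k::nat. \<exists>S K. k > 0 \<and> partition_11 V E S K \<and> card K = k \<and>
       (((\<forall>v\<in>K. degree V E v = k) \<and> (\<Sum>v\<in>S. degree V E v) = k) \<or>
        ((\<forall>v\<in>K. degree V E v = k - 1) \<and> (\<forall>v\<in>S. degree V E v = 0)))"
  then obtain k S K where kp: "k > 0" and p: "partition_11 V E S K" and ck: "card K = k"
    and c: "((\<forall>v\<in>K. degree V E v = k) \<and> (\<Sum>v\<in>S. degree V E v) = k) \<or>
        ((\<forall>v\<in>K. degree V E v = k - 1) \<and> (\<forall>v\<in>S. degree V E v = 0))" by blast
  have fS: "finite S" and fK: "finite K" using fin_parts[OF g p] by auto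
  define N where "N v = {u\<in>S. E v u}" for v
  define M where "M v = {u\<in>S. \<not> E v u}" for v
  have cT: "\<And>v. v \<in> K \<Longrightarrow> card (insert v (M v)) = Suc (card (M v))"
    and cMN: "\<And>v. v \<in> K \<Longrightarrow> card (M v) + card (N v) = card S"
    using card_T[OF g p] unfolding M_def N_def by auto
  have dK: "\<And>v. v \<in> K \<Longrightarrow> degree V E v = (card K - 1) + card (N v)"
    using degK[OF g p] unfolding N_def by auto
  have mc: "\<And>I. maximal_independent_set V E I \<Longrightarrow> I = S \<or> (\<exists>v\<in>K. I = insert v (M v))"
    using max_char[OF g p] unfolding M_def by auto
  have hp: "has_11_partition V E" using p unfolding has_11_partition_def by blast
  have "well_covered V E"
    using c
  proof
    assume c1: "(\<forall>v\<in>K. degree V E v = k) \<and> (\<Sum>v\<in>S. degree V E v) = k"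
    have N1: "\<And>v. v \<in> K \<Longrightarrow> card (N v) = 1"
    proof -
      fix v assume v: "v \<in> K"
      have "degree V E v = k" using c1 v by blast
      then show "card (N v) = 1" using dK[OF v] ck kp by linarith
    qed
    have cs: "\<And>v. v \<in> K \<Longrightarrow> card (insert v (M v)) = card S"
    proof -
      fix v assume v: "v \<in> K"
      show "card (insert v (M v)) = card S" using cT[OF v] cMN[OF v] N1[OF v] by linarith
    qed
    have "\<And>I. maximal_independent_set V E I \<Longrightarrow> card I = card S"
    proof -
      fix I assume "maximal_independent_set V E I"
      from mc[OF this] show "card I = card S"
      proof
        assume "\<exists>v\<in>K. I = insert v (M v)"
        then obtain v where "v \<in> K" "I = insert v (M v)" by blast
        then show ?thesis using cs by simp
      qed simp
    qed
    then show ?thesis unfolding well_covered_def by simp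
  next
    assume c2: "(\<forall>v\<in>K. degree V E v = k - 1) \<and> (\<forall>v\<in>S. degree V E v = 0)"
    have N0: "\<And>v. v \<in> K \<Longrightarrow> card (N v) = 0"
    proof -
      fix v assume v: "v \<in> K"
      have "degree V E v = k - 1" using c2 v by blast
      then show "card (N v) = 0" using dK[OF v] ck by linarith
    qed
    then have N0': "\<And>v. v \<in> K \<Longrightarrow> N v = {}" using fS unfolding N_def by simp
    have cs: "\<And>v. v \<in> K \<Longrightarrow> card (insert v (M v)) = Suc (card S)"
    proof -
      fix v assume v: "v \<in> K"
      show "card (insert v (M v)) = Suc (card S)" using cT[OF v] cMN[OF v] N0[OF v] by linarith
    qed
    have nS: "\<And>I. maximal_independent_set V E I \<Longrightarrow> I \<noteq> S"
    proof
      fix I assume I: "maximal_independent_set V E I" and IS: "I = S"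
      have "K \<noteq> {}" using kp ck by auto
      then obtain v where v: "v \<in> K" by blast
      have Sv: "insert v S = insert v (M v)" using N0'[OF v] unfolding M_def N_def by blast
      have "independent_set V E (insert v S)"
        unfolding Sv M_def by (rule T_indep[OF g p v])
      then have "insert v S = S" using I IS unfolding maximal_independent_set_def by blast
      then show False using p v unfolding partition_11_def by blast
    qed
    have "\<And>I. maximal_independent_set V E I \<Longrightarrow> card I = Suc (card S)"
    proof -
      fix I assume I: "maximal_independent_set V E I"
      have "I \<noteq> S" using I nS by blast
      with mc[OF I] obtain v where "v \<in> K" "I = insert v (M v)" by blast
      then show "card I = Suc (card S)" using cs by simp
    qed
    then show ?thesis unfolding well_covered_def by simp
  qed
  then show "well_covered_11 V E" using hp unfolding well_covered_11_def by blast
qed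

end
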